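(* For every integer $m\ge2$ and every $a\ge0$, all leading principal minors $R_l=\det\big((R_{ij})_{1\le i,j\le l}\big)$, $l=1,\dots,m$, are positive; hence $R$ is positive definite. Moreover every entry of $R^{-1}$ is strictly positive: $(R^{-1})_{ij}>0$ for all $i,j=1,\dots,m$. In particular $r_i=\sum_{j=1}^m(R^{-1})_{ij}>0$ for each $i$.
   Context: $R$ is the symmetric tridiagonal $m\times m$ matrix with $R_{ii}=2a^2+2i-1$ ($1\le i\le m$), $R_{i,i+1}=R_{i+1,i}=-(a^2+i)$ ($1\le i\le m-1$), and all other entries zero. *)

theory Defs
  imports "Jordan_Normal_Form.Matrix" "Jordan_Normal_Form.Determinant"
begin

text \<open>The m x m symmetric tridiagonal matrix R (paper indices 1..m are shifted
  to 0-based indices 0..m-1: entry (i,j) here is the paper's entry (i+1,j+1)).\<close>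
definition Rmat :: "nat \<Rightarrow> real \<Rightarrow> real mat" where
  "Rmat m a = mat m m (\<lambda>(i,j).
     if i = j then 2 * a^2 + 2 * real (i+1) - 1
     else if j = i + 1 then - (a^2 + real (i+1))
     else if i = j + 1 then - (a^2 + real (j+1))
     else 0)"

definition leading_submat :: "'a mat \<Rightarrow> nat \<Rightarrow> 'a mat" where
  "leading_submat A l = mat l l (\<lambda>(i,j). A $$ (i,j))"

definition pos_def_mat :: "real mat \<Rightarrow> bool" where
  "pos_def_mat A \<longleftrightarrow> A \<in> carrier_mat (dim_row A) (dim_row A) \<and> A = transpose_mat A \<and>
     (\<forall>v \<in> carrier_vec (dim_row A). v \<noteq> 0\<^sub>v (dim_row A) \<longrightarrow> v \<bullet> (A *\<^sub>v v) > 0)"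

end

theory Submission
  imports Defs
begin

definition rr :: "real \<Rightarrow> nat \<Rightarrow> nat \<Rightarrow> real" where
 "rr a i j = (if i = j then 2 * a^2 + 2 * real (i+1) - 1
     else if j = i + 1 then - (a^2 + real (i+1))
     else if i = j + 1 then - (a^2 + real (j+1))
     else 0)"

lemma Rmat_rr: "Rmat m a = mat m m (\<lambda>(i,j). rr a i j)"
  unfolding Rmat_def rr_def by simp

lemma Rmat_idx[simp]: "i < m \<Longrightarrow> j < m \<Longrightarrow> Rmat m a $$ (i,j) = rr a i j"
  unfolding Rmat_rr by simp

lemma Rmat_dim[simp]: "dim_row (Rmat m a) = m" "dim_col (Rmat m a) = m"
  "Rmat m a \<in> carrier_mat m m"
  unfolding Rmat_rr by auto

lemma leading_Rmat: "l \<le> m \<Longrightarrow> leading_submat (Rmat m a) l = Rmat l a"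
  unfolding leading_submat_def by (rule eq_matI) auto

lemma row_sum:
  fixes x :: "nat \<Rightarrow> real"
  assumes "i < m"
  defines "y \<equiv> \<lambda>p. if 1 \<le> p \<and> p \<le> m then x (p - 1) else 0"
  shows "(\<Sum>k<m. rr a i k * x k) = (a^2+i)*(y (i+1) - y i) + (a^2+i+1)*(y(i+1) - y(i+2))"
proof -
  have e: "rr a i k * x k = (if k = i then (2 * a^2 + 2 * real (i+1) - 1) * x i else 0)
     + (if k = i + 1 then - (a^2 + real (i+1)) * x (i+1) else 0)
     + (if Suc k = i then - (a^2 + real i) * x k else 0)" for k
    unfolding rr_def by auto
  have s3: "(\<Sum>k<m. (if Suc k = i then - (a^2 + real i) * x k else 0)) =
     (if i = 0 then 0 else - (a^2 + real i) * x (i - 1))"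
  proof (cases i)
    case 0 then show ?thesis by simp
  next
    case (Suc i') then show ?thesis using assms(1) by (simp add: sum.delta)
  qed
  show ?thesis
    unfolding e sum.distrib s3 using assms(1)
    by (cases i) (auto simp: y_def sum.delta algebra_simps)
qed

lemma det_Rmat_0: "det (Rmat 0 a) = 1"
  unfolding det_def Rmat_rr by simp

lemma det_Rmat_1: "det (Rmat 1 a) = 2*a^2+1"
proof -
  have "det (Rmat 1 a) = (\<Sum>j<1. Rmat 1 a $$ (0,j) * cofactor (Rmat 1 a) 0 j)"
    by (rule laplace_expansion_row) auto
  also have "\<dots> = (2*a^2+1) * det (mat_delete (Rmat 1 a) 0 0)"
    by (simp add: cofactor_def rr_def)
  also have "mat_delete (Rmat 1 a) 0 0 = Rmat 0 a"
    by (rule eq_matI) (auto simp: mat_delete_def)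
  finally show ?thesis by (simp add: det_Rmat_0)
qed

lemma det_Rmat_rec: "det (Rmat (n+2) a) = (2*a^2 + 2*real n + 3) * det (Rmat (n+1) a)
   - (a^2 + real n + 1)^2 * det (Rmat n a)"
proof -
  let ?A = "Rmat (n+2) a"
  have "det ?A = (\<Sum>j<n+2. ?A $$ (n+1,j) * cofactor ?A (n+1) j)"
    by (rule laplace_expansion_row) auto
  also have "\<dots> = ?A $$ (n+1,n) * cofactor ?A (n+1) n + ?A $$ (n+1,n+1) * cofactor ?A (n+1) (n+1)"
  proof -
    have "(\<Sum>j<n. ?A $$ (n+1,j) * cofactor ?A (n+1) j) = 0"
      by (rule sum.neutral) (auto simp: rr_def)
    then show ?thesis by (simp add: lessThan_Suc)
  qed
  finally have D: "det ?A = ?A $$ (n+1,n) * cofactor ?A (n+1) n + ?A $$ (n+1,n+1) * cofactor ?A (n+1) (n+1)" .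
  have D1: "mat_delete ?A (n+1) (n+1) = Rmat (n+1) a"
    by (rule eq_matI) (auto simp: mat_delete_def)
  have D2: "det (mat_delete ?A (n+1) n) = - (a^2 + real n + 1) * det (Rmat n a)"
  proof -
    let ?M = "mat_delete ?A (n+1) n"
    have M: "?M \<in> carrier_mat (n+1) (n+1)" by (auto simp: mat_delete_def)
    have "det ?M = (\<Sum>i<n+1. ?M $$ (i,n) * cofactor ?M i n)"
      by (rule laplace_expansion_column[OF M]) auto
    also have "\<dots> = ?M $$ (n,n) * cofactor ?M n n"
    proof -
      have "(\<Sum>i<n. ?M $$ (i,n) * cofactor ?M i n) = 0"
        by (rule sum.neutral) (auto simp: rr_def mat_delete_def)
      then show ?thesis by (simp add: lessThan_Suc)
    qed
    finally have "det ?M = ?M $$ (n,n) * cofactor ?M n n" .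
    moreover have "mat_delete ?M n n = Rmat n a"
      by (rule eq_matI) (auto simp: mat_delete_def)
    ultimately show ?thesis by (simp add: cofactor_def mat_delete_def rr_def algebra_simps)
  qed
  have C1: "cofactor ?A (n+1) (n+1) = det (Rmat (n+1) a)"
    unfolding cofactor_def D1 by simp
  have C2: "cofactor ?A (n+1) n = (a^2 + real n + 1) * det (Rmat n a)"
    unfolding cofactor_def D2 by (simp add: algebra_simps)
  have E1: "?A $$ (n+1,n) = - (a^2 + real n + 1)" by (simp add: rr_def)
  have E2: "?A $$ (n+1,n+1) = 2*a^2 + 2*real n + 3" by (simp add: rr_def)
  show ?thesis unfolding D C1 C2 E1 E2 by (simp add: algebra_simps power2_eq_square)
qed

lemma det_Rmat_pos_aux:
  "det (Rmat (l+1) a) \<ge> (a^2 + real l + 1) * det (Rmat l a) \<and> det (Rmat l a) > 0"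
proof (induction l)
  case 0
  have "det (Rmat (0+1) a) = 2*a^2+1" using det_Rmat_1[of a] by simp
  then show ?case by (simp add: det_Rmat_0)
next
  case (Suc l)
  define c where "c = a^2 + real l + 1"
  have c: "c > 0" unfolding c_def by (simp add: add_nonneg_pos)
  have i1: "det (Rmat (l+1) a) \<ge> c * det (Rmat l a)" and i2: "det (Rmat l a) > 0"
    using Suc unfolding c_def by auto
  have "c * (c * det (Rmat l a)) \<le> c * det (Rmat (l+1) a)"
    using i1 c by (intro mult_left_mono) auto
  moreover have "det (Rmat (l+2) a) = (2*c+1) * det (Rmat (l+1) a) - c^2 * det (Rmat l a)"
    unfolding det_Rmat_rec c_def by (simp add: algebra_simps)
  moreover have "det (Rmat (l+1) a) > 0" using i1 mult_pos_pos[OF c i2]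
    by linarith
  ultimately show ?case unfolding c_def
    by (simp add: power2_eq_square algebra_simps)
qed

lemma det_Rmat_pos: "det (Rmat l a) > 0"
  using det_Rmat_pos_aux by blast

lemma inv_pos:
  fixes y :: "nat \<Rightarrow> real" and b :: real
  assumes b: "b \<ge> 0" and y0: "y 0 = 0" and ym: "y (m+1) = 0" and j: "1 \<le> j" "j \<le> m"
    and eq: "\<And>p. 1 \<le> p \<Longrightarrow> p \<le> m \<Longrightarrow>
       (b + real p - 1)*(y p - y (p-1)) + (b + real p)*(y p - y (p+1)) = (if p = j then 1 else 0)"
    and k: "1 \<le> k" "k \<le> m"
  shows "y k > 0"
proof -
  define w where "w p = (b + real p)*(y p - y(p+1))" for p
  have wrec: "p \<le> m \<Longrightarrow> w p = w 0 + (if j \<le> p then 1 else 0)" for p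
  proof (induction p)
    case 0 show ?case using j by simp
  next
    case (Suc p)
    have "w (Suc p) - w p = (if Suc p = j then 1 else 0)"
      using eq[of "Suc p"] Suc.prems by (simp add: w_def algebra_simps)
    then show ?case using Suc by (cases "j \<le> p") auto
  qed
  define S where "S k = (\<Sum>i\<in>{k..m}. 1/(b+real i))" for k
  have ystep: "1 \<le> i \<Longrightarrow> y i - y (Suc i) = w i / (b + real i)" for i
    using b unfolding w_def by (simp add: field_simps)
  have yform: "y k = w 0 * S k + S (max k j)" if k: "1 \<le> k" "k \<le> m" for k
  proof -
    have "(\<Sum>i=k..m. y (Suc i) - y i) = y (Suc m) - y k"
      using k by (intro sum_Suc_diff) auto
    then have "y k = (\<Sum>i=k..m. y i - y (Suc i))" using ym
      by (simp add: sum_subtractf)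
    also have "\<dots> = (\<Sum>i=k..m. w i / (b + real i))"
      using k by (intro sum.cong) (auto simp: ystep)
    also have "\<dots> = (\<Sum>i=k..m. w 0 * (1/(b+real i)) + (if j \<le> i then 1/(b+real i) else 0))"
    proof (intro sum.cong refl)
      fix i assume "i \<in> {k..m}"
      then have "w i = w 0 + (if j \<le> i then 1 else 0)" using wrec[of i] by simp
      then show "w i / (b + real i) = w 0 * (1/(b+real i)) + (if j \<le> i then 1/(b+real i) else 0)"
        by (simp add: add_divide_distrib)
    qed
    also have "\<dots> = w 0 * S k + (\<Sum>i=k..m. (if j \<le> i then 1/(b+real i) else 0))"
      by (simp add: sum.distrib sum_distrib_left S_def)
    also have "(\<Sum>i=k..m. (if j \<le> i then 1/(b+real i) else 0)) = (\<Sum>i\<in>{i\<in>{k..m}. j \<le> i}. 1/(b+real i))"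
      by (rule sum.inter_filter[symmetric]) simp
    also have "{i\<in>{k..m}. j \<le> i} = {max k j..m}" by auto
    finally show ?thesis unfolding S_def by simp
  qed
  have Spos: "S k > 0" if "1 \<le> k" "k \<le> m" for k
    unfolding S_def using that b by (intro sum_pos) (auto intro: add_nonneg_pos)
  have Smono: "S 1 \<ge> S k" if "1 \<le> k" for k
    unfolding S_def using that b by (intro sum_mono2) (auto intro: add_nonneg_pos)
  have w0: "w 0 = - b * y 1" unfolding w_def using y0 by simp
  have y1: "y 1 = w 0 * S 1 + S j" using yform[of 1] j by simp
  have key: "(1 + b * S 1) * w 0 = - b * S j"
  proof -
    have e: "S j = y 1 - w 0 * S 1" using y1 by simp
    show ?thesis unfolding e w0 by (simp add: algebra_simps)
  qed
  have Sj: "S j > 0" "S 1 \<ge> S j" using Spos[OF j] Smono[OF j(1)] by auto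
  have Sk: "S k > 0" "S 1 \<ge> S k" using Spos[OF k] Smono[OF k(1)] by auto
  have pos1: "1 + b * S 1 > 0" using mult_nonneg_nonneg[OF b, of "S 1"] Sk by linarith
  show ?thesis
  proof (cases "k \<le> j")
    case True
    then have yk: "y k = w 0 * S k + S j" using yform[OF k] by (simp add: max_def)
    have "(1 + b * S 1) * y k = S k * ((1 + b * S 1) * w 0) + (1 + b * S 1) * S j"
      unfolding yk by (simp add: algebra_simps)
    also have "\<dots> = S j * (1 + b * (S 1 - S k))" unfolding key by (simp add: algebra_simps)
    finally have "(1 + b * S 1) * y k = S j * (1 + b * (S 1 - S k))" .
    moreover have "S j * (1 + b * (S 1 - S k)) > 0"
      using Sj Sk b by (intro mult_pos_pos) (auto simp: add_pos_nonneg)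
    ultimately have "(1 + b * S 1) * y k > 0" by simp
    then show ?thesis using pos1 zero_less_mult_pos by blast
  next
    case False
    then have yk: "y k = w 0 * S k + S k" using yform[OF k] by (simp add: max_def)
    have "(1 + b * S 1) * y k = S k * ((1 + b * S 1) * w 0) + (1 + b * S 1) * S k"
      unfolding yk by (simp add: algebra_simps)
    also have "\<dots> = S k * (1 + b * (S 1 - S j))" unfolding key by (simp add: algebra_simps)
    finally have "(1 + b * S 1) * y k = S k * (1 + b * (S 1 - S j))" .
    moreover have "S k * (1 + b * (S 1 - S j)) > 0"
      using Sj Sk b by (intro mult_pos_pos) (auto simp: add_pos_nonneg)
    ultimately have "(1 + b * S 1) * y k > 0" by simp
    then show ?thesis using pos1 zero_less_mult_pos by blast
  qed
qed


lemma qf_id: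
  fixes y :: "nat \<Rightarrow> real" assumes "y 0 = 0"
  shows "(\<Sum>i<n. y(i+1)*((b+real i)*(y(i+1) - y i) + (b+real i+1)*(y(i+1)-y(i+2))))
     = (\<Sum>i<n. (b+real i)*(y i - y(i+1))^2) + (b+real n)*y n*(y n - y(n+1))"
proof (induction n)
  case 0 show ?case using assms by simp
next
  case (Suc n) then show ?case by (simp add: algebra_simps power2_eq_square)
qed

lemma Rmat_pd:
  assumes v: "v \<in> carrier_vec m" and nz: "v \<noteq> 0\<^sub>v m" and b: "a \<ge> 0"
  shows "v \<bullet> (Rmat m a *\<^sub>v v) > 0"
proof -
  define y where "y p = (if 1 \<le> p \<and> p \<le> m then v $ (p - 1) else 0)" for p
  define b where "b = a^2"
  have b0: "b \<ge> 0" unfolding b_def by simp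
  have dv: "dim_vec v = m" using v by auto
  have "v \<bullet> (Rmat m a *\<^sub>v v) = (\<Sum>i<m. v $ i * (\<Sum>k<m. rr a i k * v $ k))"
    unfolding scalar_prod_def using dv
    by (simp add: atLeast0LessThan scalar_prod_def row_def)
  also have "\<dots> = (\<Sum>i<m. y(i+1)*((b+real i)*(y(i+1) - y i) + (b+real i+1)*(y(i+1)-y(i+2))))"
  proof (intro sum.cong refl)
    fix i assume i: "i \<in> {..<m}"
    show "v $ i * (\<Sum>k<m. rr a i k * v $ k) = y(i+1)*((b+real i)*(y(i+1) - y i) + (b+real i+1)*(y(i+1)-y(i+2)))"
      using row_sum[where x="\<lambda>k. v $ k" and i=i and m=m and a=a] i unfolding y_def b_def by auto
  qed
  also have "\<dots> = (\<Sum>i<m. (b+real i)*(y i - y(i+1))^2) + (b+real m)*(y m)^2"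
    by (subst qf_id) (auto simp: y_def power2_eq_square)
  finally have Q: "v \<bullet> (Rmat m a *\<^sub>v v) = (\<Sum>i<m. (b+real i)*(y i - y(i+1))^2) + (b+real m)*(y m)^2" .
  have tn: "\<And>i. i \<in> {..<m} \<Longrightarrow> (b+real i)*(y i - y(i+1))^2 \<ge> 0" using b0 by simp
  have S0: "(\<Sum>i<m. (b+real i)*(y i - y(i+1))^2) \<ge> 0" by (intro sum_nonneg tn)
  have m0: "m > 0"
  proof (rule ccontr)
    assume "\<not> m > 0" then have "m = 0" by simp
    then show False using nz v by (auto intro!: eq_vecI)
  qed
  show ?thesis
  proof (rule ccontr)
    assume "\<not> ?thesis"
    then have Qle: "(\<Sum>i<m. (b+real i)*(y i - y(i+1))^2) + (b+real m)*(y m)^2 \<le> 0" using Q by simp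
    have "(b+real m)*(y m)^2 \<ge> 0" using b0 by simp
    then have "(b+real m)*(y m)^2 = 0" using Qle S0 by linarith
    then have ym: "y m = 0" using b0 m0 by (auto simp: add_nonneg_pos)
    have diff: "y i = y (i+1)" if "1 \<le> i" "i < m" for i
    proof -
      have "(b+real i)*(y i - y(i+1))^2 \<le> (\<Sum>i<m. (b+real i)*(y i - y(i+1))^2)"
        using that by (intro member_le_sum tn) auto
      moreover have "(b+real m)*(y m)^2 \<ge> 0" using b0 by simp
      ultimately have "(b+real i)*(y i - y(i+1))^2 \<le> 0" using Qle by linarith
      moreover have "(b+real i)*(y i - y(i+1))^2 \<ge> 0" using b0 by simp
      ultimately have "(b+real i)*(y i - y(i+1))^2 = 0" by linarith
      moreover have "b + real i > 0" using b0 that by (simp add: add_nonneg_pos)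
      ultimately show ?thesis by simp
    qed
    have all0: "\<forall>d. d < m \<longrightarrow> y (m - d) = 0"
    proof
      fix d show "d < m \<longrightarrow> y (m - d) = 0"
      proof (induction d)
        case 0 show ?case using ym by simp
      next
        case (Suc d)
        show ?case
        proof
          assume "Suc d < m"
          then have "y (m - Suc d) = y (m - Suc d + 1)" by (intro diff) auto
          also have "m - Suc d + 1 = m - d" using \<open>Suc d < m\<close> by simp
          finally show "y (m - Suc d) = 0" using Suc \<open>Suc d < m\<close> by simp
        qed
      qed
    qed
    then have "v $ i = 0" if "i < m" for i
      using spec[OF all0, of "m - (i+1)"] that unfolding y_def by auto
    then have "v = 0\<^sub>v m" using v by (intro eq_vecI) auto
    then show False using nz by simp
  qed
qed


lemma rr_sym: "rr a i j = rr a j i" unfolding rr_def by auto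

theorem mainTheorem7:
  fixes m :: nat and a :: real
  assumes "m \<ge> 2" and "a \<ge> 0"
  shows "(\<forall>l \<in> {1..m}. det (leading_submat (Rmat m a) l) > 0)
    \<and> pos_def_mat (Rmat m a)
    \<and> invertible_mat (Rmat m a)
    \<and> (\<forall>Rinv \<in> carrier_mat m m. Rmat m a * Rinv = 1\<^sub>m m \<and> Rinv * Rmat m a = 1\<^sub>m m \<longrightarrow>
         (\<forall>i < m. \<forall>j < m. Rinv $$ (i,j) > 0)
       \<and> (\<forall>i < m. (\<Sum>j < m. Rinv $$ (i,j)) > 0))"
proof (intro conjI ballI impI allI)
  fix l assume "l \<in> {1..m}"
  then show "det (leading_submat (Rmat m a) l) > 0"
    by (simp add: leading_Rmat det_Rmat_pos)
next
  show "pos_def_mat (Rmat m a)"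
    unfolding pos_def_mat_def
  proof (intro conjI ballI impI)
    show "Rmat m a = transpose_mat (Rmat m a)"
      by (rule eq_matI) (auto simp: rr_sym)
  qed (use Rmat_pd[OF _ _ assms(2)] in auto)
next
  have "Rmat m a \<in> Units (ring_mat TYPE(real) m m)"
    by (rule det_non_zero_imp_unit[of _ m]) (auto simp: det_Rmat_pos[THEN less_imp_neq, symmetric])
  then obtain B where B: "B \<in> carrier_mat m m" "B * Rmat m a = 1\<^sub>m m" "Rmat m a * B = 1\<^sub>m m"
    unfolding Units_def ring_mat_def by auto
  then show "invertible_mat (Rmat m a)"
    unfolding invertible_mat_def inverts_mat_def square_mat.simps
    by (intro conjI exI[of _ B]) auto
next
  fix Rinv :: "real mat"
  assume Rc: "Rinv \<in> carrier_mat m m"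
    and inv: "Rmat m a * Rinv = 1\<^sub>m m \<and> Rinv * Rmat m a = 1\<^sub>m m"
  have pos: "Rinv $$ (i,j0) > 0" if i: "i < m" and j0: "j0 < m" for i j0
  proof -
    define y where "y p = (if 1 \<le> p \<and> p \<le> m then Rinv $$ (p - 1, j0) else 0)" for p
    have eq: "(a^2 + real p - 1)*(y p - y (p-1)) + (a^2 + real p)*(y p - y (p+1))
       = (if p = j0 + 1 then 1 else 0)" if p: "1 \<le> p" "p \<le> m" for p
    proof -
      obtain i' where ip: "p = i' + 1" using p by (cases p) auto
      have im: "i' < m" using p ip by simp
      have "(Rmat m a * Rinv) $$ (i', j0) = (\<Sum>k<m. rr a i' k * Rinv $$ (k, j0))"
        using Rc im j0 by (simp add: scalar_prod_def atLeast0LessThan)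
      also have "\<dots> = (a^2+i')*(y (i'+1) - y i') + (a^2+i'+1)*(y(i'+1) - y(i'+2))"
        using row_sum[where x="\<lambda>k. Rinv $$ (k, j0)" and i=i' and m=m and a=a] im
        unfolding y_def by simp
      finally show ?thesis using inv im j0 ip by (simp add: algebra_simps)
    qed
    have "y (i+1) > 0"
      by (rule inv_pos[where b="a^2" and m=m and j="j0+1" and y=y]) (use eq i j0 in \<open>auto simp: y_def\<close>)
    then show ?thesis unfolding y_def using i by simp
  qed
  then show "\<And>i j. i < m \<Longrightarrow> j < m \<Longrightarrow> Rinv $$ (i,j) > 0" by blast
  fix i assume "i < m"
  then show "(\<Sum>j < m. Rinv $$ (i,j)) > 0"
    using assms(1) pos by (intro sum_pos) auto
qed


end
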